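(* Let $X$ be a Banach space with a Schauder basis $(e_i)_i$. For every $T\in\mathbb{R} I\oplus\mathcal{K}_\mathrm{diag}(X)$ and $i\in\mathbb{N}$ set $\lambda_{T,i}=e_i^*(Te_i)$; the limit $\lambda_{T,\omega}=\lim_i\lambda_{T,i}$ exists. For every closed subset $L$ of $[1,\omega]$ define $\mathcal{A}_L=\{T\in\mathbb{R} I\oplus\mathcal{K}_\mathrm{diag}(X):\lambda_{T,\kappa}=0\text{ for all }\kappa\in L\}$. Then the closed ideals of $\mathbb{R} I\oplus\mathcal{K}_\mathrm{diag}(X)$ are precisely the spaces $\mathcal{A}_L$, $L$ ranging over the closed subsets of $[1,\omega]$.
   Context: $(e_i^* )_i$ are the biorthogonal functionals. $T\in\mathcal{L}(X)$ is diagonal if $e_j^*(Te_i)=0$ for $i\ne j$; $\mathcal{K}_\mathrm{diag}(X)$ is the space of compact diagonal operators, and $\mathbb{R} I\oplus\mathcal{K}_\mathrm{diag}(X)$ is the unital Banach algebra (composition, operator norm) of operators $\lambda I+K$, $\lambda\in\mathbb{R}$, $K\in\mathcal{K}_\mathrm{diag}(X)$. $[1,\omega]=\{1,2,3,\dots\}\cup\{\omega\}$ carries the order topology (the one-point compactification of $\mathbb{N}$). *)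

theory Defs
  imports "HOL-Analysis.Analysis"
begin

definition schauder_basis :: "(nat \<Rightarrow> 'a::banach) \<Rightarrow> bool" where
  "schauder_basis e \<longleftrightarrow> (\<forall>x. \<exists>!a::nat \<Rightarrow> real. (\<lambda>n. a n *\<^sub>R e n) sums x)"

definition coord :: "(nat \<Rightarrow> 'a::banach) \<Rightarrow> nat \<Rightarrow> 'a \<Rightarrow> real" where
  "coord e i x = (THE a::nat \<Rightarrow> real. (\<lambda>n. a n *\<^sub>R e n) sums x) i"

definition diagonal_op :: "(nat \<Rightarrow> 'a::banach) \<Rightarrow> ('a \<Rightarrow>\<^sub>L 'a) \<Rightarrow> bool" where
  "diagonal_op e T \<longleftrightarrow> (\<forall>i j. i \<noteq> j \<longrightarrow> coord e j (blinfun_apply T (e i)) = 0)"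

definition compact_op :: "('a::banach \<Rightarrow>\<^sub>L 'a) \<Rightarrow> bool" where
  "compact_op K \<longleftrightarrow> compact (closure (blinfun_apply K ` ball 0 1))"

definition diag_alg :: "(nat \<Rightarrow> 'a::banach) \<Rightarrow> ('a \<Rightarrow>\<^sub>L 'a) set" where
  "diag_alg e = {c *\<^sub>R id_blinfun + K | c K. compact_op K \<and> diagonal_op e K}"

definition lam :: "(nat \<Rightarrow> 'a::banach) \<Rightarrow> ('a \<Rightarrow>\<^sub>L 'a) \<Rightarrow> nat \<Rightarrow> real" where
  "lam e T i = coord e i (blinfun_apply T (e i))"

text \<open>lambda_{T,kappa} for kappa in [0,omega] (= enat, carrying its order topology);
  at infinity it is the limit of the diagonal entries.\<close>
definition lam_ext :: "(nat \<Rightarrow> 'a::banach) \<Rightarrow> ('a \<Rightarrow>\<^sub>L 'a) \<Rightarrow> enat \<Rightarrow> real" where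
  "lam_ext e T k = (case k of enat i \<Rightarrow> lam e T i | \<infinity> \<Rightarrow> lim (lam e T))"

definition A_L :: "(nat \<Rightarrow> 'a::banach) \<Rightarrow> enat set \<Rightarrow> ('a \<Rightarrow>\<^sub>L 'a) set" where
  "A_L e L = {T \<in> diag_alg e. \<forall>k\<in>L. lam_ext e T k = 0}"

definition closed_ideal_of :: "('a::banach \<Rightarrow>\<^sub>L 'a) set \<Rightarrow> ('a \<Rightarrow>\<^sub>L 'a) set \<Rightarrow> bool" where
  "closed_ideal_of A J \<longleftrightarrow> J \<subseteq> A \<and> subspace J \<and> closed J \<and>
     (\<forall>S\<in>A. \<forall>T\<in>J. S o\<^sub>L T \<in> J \<and> T o\<^sub>L S \<in> J)"

end

theory Submission
  imports Defs
begin

definition Pn :: "(nat \<Rightarrow> 'a::banach) \<Rightarrow> nat \<Rightarrow> 'a \<Rightarrow> 'a" where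
  "Pn e n x = (\<Sum>i<n. coord e i x *\<^sub>R e i)"

definition tn :: "(nat \<Rightarrow> 'a::banach) \<Rightarrow> 'a \<Rightarrow> real" where
  "tn e x = (SUP n. norm (Pn e n x))"

locale SB =
  fixes e :: "nat \<Rightarrow> 'a::banach"
  assumes sb: "schauder_basis e"
begin

lemma coord_sums: "(\<lambda>n. coord e n x *\<^sub>R e n) sums x"
proof -
  have "\<exists>!a::nat \<Rightarrow> real. (\<lambda>n. a n *\<^sub>R e n) sums x" using sb unfolding schauder_basis_def by blast
  from theI'[OF this] show ?thesis unfolding coord_def .
qed

lemma coord_unique: "(\<lambda>n. a n *\<^sub>R e n) sums x \<Longrightarrow> coord e i x = a i"
proof -
  assume h: "(\<lambda>n. a n *\<^sub>R e n) sums x"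
  have "\<exists>!a::nat \<Rightarrow> real. (\<lambda>n. a n *\<^sub>R e n) sums x" using sb unfolding schauder_basis_def by blast
  then have "(THE a. (\<lambda>n. a n *\<^sub>R e n) sums x) = a" using h by (metis (mono_tags) the1_equality)
  then show ?thesis unfolding coord_def by simp
qed

lemma coord_add: "coord e i (x + y) = coord e i x + coord e i y"
proof -
  have "(\<lambda>n. coord e n x *\<^sub>R e n + coord e n y *\<^sub>R e n) sums (x + y)"
    by (intro sums_add coord_sums)
  then have "(\<lambda>n. (coord e n x + coord e n y) *\<^sub>R e n) sums (x + y)"
    by (simp add: scaleR_add_left)
  from coord_unique[OF this] show ?thesis .
qed

lemma coord_scale: "coord e i (c *\<^sub>R x) = c * coord e i x"
proof -
  have "(\<lambda>n. c *\<^sub>R (coord e n x *\<^sub>R e n)) sums (c *\<^sub>R x)"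
    by (intro sums_scaleR_right coord_sums)
  then have "(\<lambda>n. (c * coord e n x) *\<^sub>R e n) sums (c *\<^sub>R x)"
    by simp
  from coord_unique[OF this] show ?thesis .
qed

lemma linear_coord: "linear (coord e i)"
  by (rule linearI) (simp_all add: coord_add coord_scale)

lemma coord_zero[simp]: "coord e i 0 = 0"
  using linear_0[OF linear_coord] .

lemma coord_diff: "coord e i (x - y) = coord e i x - coord e i y"
  using linear_diff[OF linear_coord] .

lemma coord_minus: "coord e i (- x) = - coord e i x"
  using linear_neg[OF linear_coord] .

lemma coord_sum: "coord e i (sum f A) = (\<Sum>j\<in>A. coord e i (f j))"
  using linear_sum[OF linear_coord] .

lemma coord_basis: "coord e i (e j) = (if i = j then 1 else 0)"
proof -
  have "(\<lambda>n. (if n = j then 1 else 0) *\<^sub>R e n) sums e j"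
  proof -
    have "(\<lambda>n. (if n = j then 1 else 0) *\<^sub>R e n) = (\<lambda>r. if r = j then e r else 0)" by (rule ext) auto
    then show ?thesis using sums_single[of j e] by simp
  qed
  from coord_unique[OF this] show ?thesis by simp
qed

lemma e_nonzero: "e i \<noteq> 0"
  using coord_basis[of i i] by auto

lemma coord_all_zero: "(\<And>i. coord e i x = 0) \<Longrightarrow> x = 0"
  using coord_sums[of x] sums_unique[of "\<lambda>n. 0"] by (simp add: sums_zero sums_unique2)

lemma Pn_tendsto: "(\<lambda>n. Pn e n x) \<longlonglongrightarrow> x"
  using coord_sums[of x] unfolding sums_def Pn_def .

lemma linear_Pn: "linear (Pn e n)"
  by (rule linearI) (simp_all add: Pn_def coord_add coord_scale scaleR_add_left sum.distrib scaleR_sum_right)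

lemma Pn_Suc: "Pn e (Suc n) x = Pn e n x + coord e n x *\<^sub>R e n"
  unfolding Pn_def by simp

lemma coord_Pn: "coord e i (Pn e n x) = (if i < n then coord e i x else 0)"
  unfolding Pn_def by (simp add: coord_sum coord_scale coord_basis if_distrib cong: if_cong)

lemma bdd_Pn: "bdd_above (range (\<lambda>n. norm (Pn e n x)))"
proof -
  have "convergent (\<lambda>n. norm (Pn e n x))"
    using Pn_tendsto[of x] by (auto intro: tendsto_norm simp: convergent_def)
  then have "Bseq (\<lambda>n. norm (Pn e n x))" by (rule convergent_imp_Bseq)
  then show ?thesis by (auto simp: Bseq_def bdd_above_def) 
qed

lemma tn_ge: "norm (Pn e n x) \<le> tn e x"
  unfolding tn_def by (rule cSUP_upper[OF UNIV_I bdd_Pn])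

lemma tn_le: "(\<And>n. norm (Pn e n x) \<le> b) \<Longrightarrow> tn e x \<le> b"
  unfolding tn_def by (rule cSUP_least) auto

lemma norm_le_tn: "norm x \<le> tn e x"
proof (rule LIMSEQ_le_const2)
  show "(\<lambda>n. norm (Pn e n x)) \<longlonglongrightarrow> norm x" using Pn_tendsto by (rule tendsto_norm)
qed (use tn_ge in auto)

lemma tn_nonneg: "0 \<le> tn e x"
  using norm_le_tn[of x] norm_ge_zero[of x] by linarith

lemma tn_add: "tn e (x + y) \<le> tn e x + tn e y"
proof (rule tn_le)
  fix n
  have "norm (Pn e n (x + y)) = norm (Pn e n x + Pn e n y)" using linear_add[OF linear_Pn] by simp
  also have "\<dots> \<le> norm (Pn e n x) + norm (Pn e n y)" by (rule norm_triangle_ineq)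
  also have "\<dots> \<le> tn e x + tn e y" using tn_ge by (intro add_mono) auto
  finally show "norm (Pn e n (x + y)) \<le> tn e x + tn e y" .
qed

lemma tn_scale_le: "tn e (c *\<^sub>R x) \<le> \<bar>c\<bar> * tn e x"
proof (rule tn_le)
  fix n
  have "norm (Pn e n (c *\<^sub>R x)) = \<bar>c\<bar> * norm (Pn e n x)"
    using linear_scale[OF linear_Pn] by simp
  also have "\<dots> \<le> \<bar>c\<bar> * tn e x" using tn_ge by (intro mult_left_mono) auto
  finally show "norm (Pn e n (c *\<^sub>R x)) \<le> \<bar>c\<bar> * tn e x" .
qed

lemma tn_scale: "tn e (c *\<^sub>R x) = \<bar>c\<bar> * tn e x"
proof (cases "c = 0")
  case True
  then show ?thesis using tn_scale_le[of 0 x] tn_nonneg[of 0] by simp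
next
  case False
  have "tn e x = tn e (inverse c *\<^sub>R (c *\<^sub>R x))" using False by simp
  also have "\<dots> \<le> \<bar>inverse c\<bar> * tn e (c *\<^sub>R x)" by (rule tn_scale_le)
  finally have "\<bar>c\<bar> * tn e x \<le> tn e (c *\<^sub>R x)" using False
    by (simp add: abs_inverse divide_simps mult.commute)
  then show ?thesis using tn_scale_le[of c x] by linarith
qed

lemma tn_minus: "tn e (- x) = tn e x"
  using tn_scale[of "-1" x] by simp

lemma tn_diff: "tn e (x - y) \<le> tn e x + tn e y"
  using tn_add[of x "- y"] tn_minus[of y] by simp

lemma tn_commute: "tn e (x - y) = tn e (y - x)"
  using tn_minus[of "x - y"] by simp

lemma tn_zero[simp]: "tn e 0 = 0"
  using tn_scale[of 0 0] by simp

end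

context SB begin

lemma coord_bound_tn: "\<bar>coord e i y\<bar> * norm (e i) \<le> 2 * tn e y"
proof -
  have "\<bar>coord e i y\<bar> * norm (e i) = norm (Pn e (Suc i) y - Pn e i y)" by (simp add: Pn_Suc)
  also have "\<dots> \<le> norm (Pn e (Suc i) y) + norm (Pn e i y)" by (rule norm_triangle_ineq4)
  also have "\<dots> \<le> 2 * tn e y" using tn_ge[of "Suc i" y] tn_ge[of i y] by linarith
  finally show ?thesis .
qed

lemma tn_complete:
  fixes s :: "nat \<Rightarrow> 'a"
  assumes C: "\<forall>\<epsilon>>0. \<exists>N. \<forall>m\<ge>N. \<forall>n\<ge>N. tn e (s m - s n) < \<epsilon>"
  shows "\<exists>w. \<forall>\<epsilon>>0. \<exists>N. \<forall>m\<ge>N. tn e (s m - w) \<le> \<epsilon>"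
proof -
  have cc: "Cauchy (\<lambda>m. coord e i (s m))" for i
  proof (rule metric_CauchyI)
    fix \<epsilon> :: real assume "\<epsilon> > 0"
    have ne: "norm (e i) > 0" using e_nonzero by simp
    then obtain N where N: "\<forall>m\<ge>N. \<forall>n\<ge>N. tn e (s m - s n) < \<epsilon> * norm (e i) / 2"
      using C \<open>\<epsilon> > 0\<close> by (meson divide_pos_pos half_gt_zero mult_pos_pos)
    show "\<exists>M. \<forall>m\<ge>M. \<forall>n\<ge>M. dist (coord e i (s m)) (coord e i (s n)) < \<epsilon>"
    proof (intro exI allI impI)
      fix m n assume "m \<ge> N" "n \<ge> N"
      have "\<bar>coord e i (s m - s n)\<bar> * norm (e i) < \<epsilon> * norm (e i)"
        using coord_bound_tn[of i "s m - s n"] N \<open>m \<ge> N\<close> \<open>n \<ge> N\<close> by fastforce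
      then show "dist (coord e i (s m)) (coord e i (s n)) < \<epsilon>"
        using ne by (simp add: dist_real_def coord_diff)
    qed
  qed
  define a where "a i = lim (\<lambda>m. coord e i (s m))" for i
  have a: "(\<lambda>m. coord e i (s m)) \<longlonglongrightarrow> a i" for i
    using cc[of i] unfolding a_def by (simp add: Cauchy_convergent_iff convergent_LIMSEQ_iff)
  have "Cauchy s"
  proof (rule metric_CauchyI)
    fix \<epsilon> :: real assume "\<epsilon> > 0"
    then obtain N where N: "\<forall>m\<ge>N. \<forall>n\<ge>N. tn e (s m - s n) < \<epsilon>" using C by blast
    show "\<exists>M. \<forall>m\<ge>M. \<forall>n\<ge>M. dist (s m) (s n) < \<epsilon>"
      using N norm_le_tn by (metis dist_norm order_le_less_trans)
  qed
  then obtain x where x: "s \<longlonglongrightarrow> x" using Cauchy_convergent_iff convergent_def by blast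
  define u where "u n = (\<Sum>i<n. a i *\<^sub>R e i)" for n
  have u: "(\<lambda>m. Pn e n (s m)) \<longlonglongrightarrow> u n" for n
    unfolding Pn_def u_def by (intro tendsto_sum tendsto_scaleR a tendsto_const)
  have unif: "\<forall>m\<ge>N. norm (Pn e n (s m) - u n) \<le> \<epsilon> \<and> norm (s m - x) \<le> \<epsilon>"
    if N: "\<forall>m\<ge>N. \<forall>n\<ge>N. tn e (s m - s n) < \<epsilon>" for N n \<epsilon>
  proof (intro allI impI conjI)
    fix m assume m: "m \<ge> N"
    have ev: "eventually (\<lambda>m'. tn e (s m - s m') < \<epsilon>) sequentially"
      using N m eventually_sequentially by blast
    show "norm (Pn e n (s m) - u n) \<le> \<epsilon>"
    proof (rule tendsto_upperbound)
      show "(\<lambda>m'. norm (Pn e n (s m) - Pn e n (s m'))) \<longlonglongrightarrow> norm (Pn e n (s m) - u n)"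
        by (intro tendsto_norm tendsto_diff tendsto_const u)
      show "eventually (\<lambda>m'. norm (Pn e n (s m) - Pn e n (s m')) \<le> \<epsilon>) sequentially"
      proof (rule eventually_mono[OF ev])
        fix m' assume "tn e (s m - s m') < \<epsilon>"
        moreover have "norm (Pn e n (s m) - Pn e n (s m')) \<le> tn e (s m - s m')"
          using tn_ge[of n "s m - s m'"] linear_diff[OF linear_Pn] by metis
        ultimately show "norm (Pn e n (s m) - Pn e n (s m')) \<le> \<epsilon>" by linarith
      qed
    qed simp
    show "norm (s m - x) \<le> \<epsilon>"
    proof (rule tendsto_upperbound)
      show "(\<lambda>m'. norm (s m - s m')) \<longlonglongrightarrow> norm (s m - x)"
        by (intro tendsto_norm tendsto_diff tendsto_const x)
      show "eventually (\<lambda>m'. norm (s m - s m') \<le> \<epsilon>) sequentially"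
      proof (rule eventually_mono[OF ev])
        fix m' assume "tn e (s m - s m') < \<epsilon>"
        with norm_le_tn[of "s m - s m'"] show "norm (s m - s m') \<le> \<epsilon>" by linarith
      qed
    qed simp
  qed
  have ux: "u \<longlonglongrightarrow> x"
  proof (rule LIMSEQ_I)
    fix r :: real assume "r > 0"
    then obtain N where N: "\<forall>m\<ge>N. \<forall>n\<ge>N. tn e (s m - s n) < r / 3" using C \<open>r > 0\<close> by (meson zero_less_divide_iff zero_less_numeral)
    have "(\<lambda>n. Pn e n (s N)) \<longlonglongrightarrow> s N" by (rule Pn_tendsto)
    then obtain n0 where n0: "\<forall>n\<ge>n0. norm (Pn e n (s N) - s N) < r / 3"
      using \<open>r > 0\<close> LIMSEQ_D by (metis zero_less_divide_iff zero_less_numeral)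
    show "\<exists>n0. \<forall>n\<ge>n0. norm (u n - x) < r"
    proof (intro exI allI impI)
      fix n assume "n \<ge> n0"
      have eq: "u n - x = (u n - Pn e n (s N)) + (Pn e n (s N) - s N) + (s N - x)" by simp
      have t1: "norm ((u n - Pn e n (s N)) + (Pn e n (s N) - s N) + (s N - x)) \<le>
          norm ((u n - Pn e n (s N)) + (Pn e n (s N) - s N)) + norm (s N - x)" by (rule norm_triangle_ineq)
      have t2: "norm ((u n - Pn e n (s N)) + (Pn e n (s N) - s N)) \<le>
          norm (u n - Pn e n (s N)) + norm (Pn e n (s N) - s N)" by (rule norm_triangle_ineq)
      have "norm (u n - x) \<le> norm (u n - Pn e n (s N)) + norm (Pn e n (s N) - s N) + norm (s N - x)"
        using t1 t2 unfolding eq[symmetric] by linarith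
      moreover have "norm (u n - Pn e n (s N)) \<le> r / 3"
        using unif[OF N, of n] by (simp add: norm_minus_commute)
      moreover have "norm (s N - x) \<le> r / 3" using unif[OF N, of n] by simp
      moreover have "norm (Pn e n (s N) - s N) < r / 3" using n0 \<open>n \<ge> n0\<close> by simp
      ultimately show "norm (u n - x) < r" by linarith
    qed
  qed
  then have "(\<lambda>i. a i *\<^sub>R e i) sums x" unfolding sums_def u_def .
  then have cx: "coord e i x = a i" for i by (rule coord_unique)
  have Px: "Pn e n x = u n" for n unfolding Pn_def u_def cx ..
  show ?thesis
  proof (rule exI[of _ x], intro allI impI)
    fix \<epsilon> :: real assume "\<epsilon> > 0"
    then obtain N where N: "\<forall>m\<ge>N. \<forall>n\<ge>N. tn e (s m - s n) < \<epsilon>" using C by blast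
    show "\<exists>N. \<forall>m\<ge>N. tn e (s m - x) \<le> \<epsilon>"
    proof (intro exI allI impI)
      fix m assume "m \<ge> N"
      show "tn e (s m - x) \<le> \<epsilon>"
      proof (rule tn_le)
        fix n
        have "Pn e n (s m - x) = Pn e n (s m) - u n" using linear_diff[OF linear_Pn] Px by metis
        then show "norm (Pn e n (s m - x)) \<le> \<epsilon>" using unif[OF N, of n] \<open>m \<ge> N\<close> by simp
      qed
    qed
  qed
qed

end

context SB begin

lemma baire_step: "\<exists>k x0 r. r > 0 \<and> ball x0 r \<subseteq> closure {x. tn e x \<le> real k}"
proof (rule ccontr)
  assume H: "\<not> ?thesis"
  define F where "F k = closure {x. tn e x \<le> real k}" for k :: nat
  have "euclidean interior_of \<Union>(range F) = {}"
  proof (rule Baire_category_alt)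
    show "completely_metrizable_space (euclidean :: 'a topology) \<or>
          locally_compact_space (euclidean :: 'a topology) \<and> regular_space (euclidean :: 'a topology)"
      using completely_metrizable_space_euclidean by blast
    show "countable (range F)" by simp
    fix T assume "T \<in> range F"
    then obtain k where T: "T = F k" by blast
    show "closedin euclidean T \<and> euclidean interior_of T = {}"
    proof
      show "closedin euclidean T" unfolding T F_def by simp
      show "euclidean interior_of T = {}"
      proof (rule ccontr)
        assume "euclidean interior_of T \<noteq> {}"
        then obtain x0 where "x0 \<in> interior T" by auto
        then obtain r where "r > 0" "ball x0 r \<subseteq> T" using mem_interior by blast
        then show False using H unfolding T F_def by blast
      qed
    qed
  qed
  moreover have "\<Union>(range F) = UNIV"
  proof -
    have "x \<in> F (nat \<lceil>tn e x\<rceil>)" for x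
    proof -
      have "x \<in> {x'. tn e x' \<le> real (nat \<lceil>tn e x\<rceil>)}" using real_nat_ceiling_ge by simp
      then show ?thesis unfolding F_def by (rule closure_subset[THEN subsetD])
    qed
    then show ?thesis by auto
  qed
  ultimately show False by simp
qed

lemma approx_step: "\<exists>M\<ge>0. \<forall>y \<epsilon>. \<epsilon> > 0 \<longrightarrow> (\<exists>z. tn e z \<le> M * norm y \<and> norm (y - z) < \<epsilon>)"
proof -
  obtain k x0 r where r: "r > 0" and B: "ball x0 r \<subseteq> closure {x. tn e x \<le> real k}"
    using baire_step by blast
  have A: "\<exists>z. tn e z \<le> 2 * real k \<and> norm (y - z) < \<epsilon>" if y: "norm y < r" and \<epsilon>: "\<epsilon> > 0" for y \<epsilon>
  proof -
    have "x0 + y \<in> closure {x. tn e x \<le> real k}" using B y by (auto simp: dist_norm)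
    then obtain a where a: "tn e a \<le> real k" "dist a (x0 + y) < \<epsilon> / 2"
      using \<epsilon> closure_approachable[of "x0 + y" "{x. tn e x \<le> real k}"] half_gt_zero[of \<epsilon>] by blast
    have "x0 \<in> closure {x. tn e x \<le> real k}" using B r by auto
    then obtain b where b: "tn e b \<le> real k" "dist b x0 < \<epsilon> / 2"
      using \<epsilon> closure_approachable[of x0 "{x. tn e x \<le> real k}"] half_gt_zero[of \<epsilon>] by blast
    have "tn e (a - b) \<le> 2 * real k" using tn_diff[of a b] a b by linarith
    moreover have "norm (y - (a - b)) < \<epsilon>"
    proof -
      have "norm (y - (a - b)) = norm ((x0 + y - a) + (b - x0))" by (simp add: algebra_simps)
      then have "norm (y - (a - b)) \<le> norm (x0 + y - a) + norm (b - x0)" using norm_triangle_ineq[of "x0 + y - a" "b - x0"] by linarith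
      moreover have "norm (x0 + y - a) = dist a (x0 + y)" by (simp add: dist_norm norm_minus_commute)
      moreover have "norm (b - x0) = dist b x0" by (simp add: dist_norm)
      ultimately show ?thesis using a b by linarith
    qed
    ultimately show ?thesis by blast
  qed
  define M where "M = 4 * real k / r"
  have M0: "M \<ge> 0" using r unfolding M_def by simp
  have "\<exists>z. tn e z \<le> M * norm y \<and> norm (y - z) < \<epsilon>" if \<epsilon>: "\<epsilon> > 0" for y \<epsilon>
  proof (cases "y = 0")
    case True
    then show ?thesis using \<epsilon> by (intro exI[of _ 0]) simp
  next
    case False
    then have ny: "norm y > 0" by simp
    define c where "c = r / (2 * norm y)"
    have c: "c > 0" using ny r unfolding c_def by simp
    have "norm (c *\<^sub>R y) < r" using ny r unfolding c_def by simp
    then obtain z' where z': "tn e z' \<le> 2 * real k" "norm (c *\<^sub>R y - z') < \<epsilon> * c"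
      using A[of "c *\<^sub>R y" "\<epsilon> * c"] \<epsilon> c by auto
    show ?thesis
    proof (intro exI conjI)
      have "tn e (inverse c *\<^sub>R z') = inverse c * tn e z'" using tn_scale c by simp
      also have "\<dots> \<le> inverse c * (2 * real k)" using z' c by (intro mult_left_mono) auto
      also have "\<dots> = M * norm y" unfolding M_def c_def using ny r by (simp add: field_simps)
      finally show "tn e (inverse c *\<^sub>R z') \<le> M * norm y" .
      have "y - inverse c *\<^sub>R z' = inverse c *\<^sub>R (c *\<^sub>R y - z')" using c by (simp add: algebra_simps)
      then have "norm (y - inverse c *\<^sub>R z') = inverse c * norm (c *\<^sub>R y - z')" using c by simp
      also have "\<dots> < inverse c * (\<epsilon> * c)" using z' c by (intro mult_strict_left_mono) auto
      also have "\<dots> = \<epsilon>" using c by simp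
      finally show "norm (y - inverse c *\<^sub>R z') < \<epsilon>" .
    qed
  qed
  then show ?thesis using M0 by blast
qed

end

context SB begin

lemma basis_constant: "\<exists>C>0. \<forall>x. tn e x \<le> C * norm x"
proof -
  obtain M where M0: "M \<ge> 0" and Mf: "\<forall>y \<epsilon>. \<epsilon> > 0 \<longrightarrow> (\<exists>z. tn e z \<le> M * norm y \<and> norm (y - z) < \<epsilon>)"
    using approx_step by blast
  then obtain f where f: "\<And>y \<epsilon>. \<epsilon> > 0 \<Longrightarrow> tn e (f y \<epsilon>) \<le> M * norm y \<and> norm (y - f y \<epsilon>) < \<epsilon>"
    by metis
  have main: "tn e y \<le> 2 * M * norm y" for y
  proof (cases "y = 0")
    case True then show ?thesis by simp
  next
    case False
    then have ny: "norm y > 0" by simp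
    define yy where "yy = rec_nat y (\<lambda>j v. v - f v (norm y * (1/2)^Suc j))"
    have yy0: "yy 0 = y" unfolding yy_def by simp
    have yyS: "yy (Suc j) = yy j - f (yy j) (norm y * (1/2)^Suc j)" for j unfolding yy_def by simp
    have fj: "tn e (f (yy j) (norm y * (1/2)^Suc j)) \<le> M * norm (yy j) \<and>
              norm (yy (Suc j)) < norm y * (1/2)^Suc j" for j
      using f[of "norm y * (1/2)^Suc j" "yy j"] ny yyS by simp
    have h2: "norm (yy j) \<le> norm y * (1/2)^j" for j
    proof (cases j)
      case 0 then show ?thesis by (simp add: yy0)
    next
      case (Suc i) then show ?thesis using fj[of i] by simp
    qed
    have h3: "tn e (yy j - yy (Suc j)) \<le> M * norm y * (1/2)^j" for j
    proof -
      have "tn e (yy j - yy (Suc j)) \<le> M * norm (yy j)" using fj[of j] yyS[of j] by simp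
      also have "\<dots> \<le> M * (norm y * (1/2)^j)" using h2[of j] M0 by (rule mult_left_mono)
      finally show ?thesis by simp
    qed
    have h4: "tn e (yy m - yy n) \<le> 2 * M * norm y * ((1/2)^m - (1/2)^n)" if "m \<le> n" for m n
      using that
    proof (induction n rule: dec_induct)
      case base then show ?case by simp
    next
      case (step n)
      have "tn e (yy m - yy (Suc n)) = tn e ((yy m - yy n) + (yy n - yy (Suc n)))" by simp
      also have "\<dots> \<le> tn e (yy m - yy n) + tn e (yy n - yy (Suc n))" by (rule tn_add)
      also have "\<dots> \<le> 2 * M * norm y * ((1/2)^m - (1/2)^n) + M * norm y * (1/2)^n"
        using step.IH h3[of n] by linarith
      also have "\<dots> = 2 * M * norm y * ((1/2)^m - (1/2)^Suc n)" by (simp add: algebra_simps)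
      finally show ?case .
    qed
    have h5: "tn e (yy m - yy n) \<le> 2 * M * norm y * (1/2)^min m n" for m n
    proof (cases "m \<le> n")
      case True
      have "(1/2::real)^n \<ge> 0" by simp
      then have "2 * M * norm y * ((1/2)^m - (1/2)^n) \<le> 2 * M * norm y * (1/2)^m"
        using M0 ny by (intro mult_left_mono) auto
      then show ?thesis using h4[OF True] True by (simp add: min_def)
    next
      case False
      have "(1/2::real)^m \<ge> 0" by simp
      then have "2 * M * norm y * ((1/2)^n - (1/2)^m) \<le> 2 * M * norm y * (1/2)^n"
        using M0 ny by (intro mult_left_mono) auto
      then show ?thesis using h4[of n m] False tn_commute[of "yy m" "yy n"] by (simp add: min_def)
    qed
    have Cy: "\<forall>\<epsilon>>0. \<exists>N. \<forall>m\<ge>N. \<forall>n\<ge>N. tn e (yy m - yy n) < \<epsilon>"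
    proof (intro allI impI)
      fix \<epsilon> :: real assume "\<epsilon> > 0"
      define K where "K = 2 * M * norm y + 1"
      have "0 \<le> 2 * M * norm y" using M0 by simp
      then have K: "K > 0" unfolding K_def by linarith
      obtain N where N: "(1/2::real)^N < \<epsilon> / K"
        using real_arch_pow_inv[of "\<epsilon> / K" "1/2"] \<open>\<epsilon> > 0\<close> K by auto
      show "\<exists>N. \<forall>m\<ge>N. \<forall>n\<ge>N. tn e (yy m - yy n) < \<epsilon>"
      proof (intro exI allI impI)
        fix m n assume "m \<ge> N" "n \<ge> N"
        then have "min m n \<ge> N" by simp
        then have "(1/2::real)^min m n \<le> (1/2)^N" by (intro power_decreasing) auto
        then have "2 * M * norm y * (1/2)^min m n \<le> K * (1/2)^N"
          unfolding K_def using M0 ny by (intro mult_mono) auto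
        also have "\<dots> < \<epsilon>" using N K by (simp add: field_simps)
        finally show "tn e (yy m - yy n) < \<epsilon>" using h5[of m n] by linarith
      qed
    qed
    obtain w where w: "\<forall>\<epsilon>>0. \<exists>N. \<forall>m\<ge>N. tn e (yy m - w) \<le> \<epsilon>"
      using tn_complete[OF Cy] by blast
    have "yy \<longlonglongrightarrow> w"
    proof (rule LIMSEQ_I)
      fix r :: real assume "r > 0"
      then obtain N where N: "\<forall>m\<ge>N. tn e (yy m - w) \<le> r / 2" using w by (meson half_gt_zero)
      show "\<exists>N. \<forall>m\<ge>N. norm (yy m - w) < r"
      proof (intro exI allI impI)
        fix m assume "m \<ge> N"
        then show "norm (yy m - w) < r" using N norm_le_tn[of "yy m - w"] \<open>r > 0\<close> by fastforce
      qed
    qed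
    moreover have "yy \<longlonglongrightarrow> 0"
    proof (rule Lim_null_comparison)
      show "eventually (\<lambda>j. norm (yy j) \<le> norm y * (1/2)^j) sequentially" using h2 by simp
      show "(\<lambda>j. norm y * (1/2::real)^j) \<longlonglongrightarrow> 0"
        by (intro tendsto_mult_right_zero LIMSEQ_realpow_zero) auto
    qed
    ultimately have w0: "w = 0" by (rule LIMSEQ_unique)
    show ?thesis
    proof (rule field_le_epsilon)
      fix r :: real assume "r > 0"
      then obtain N where N: "\<forall>m\<ge>N. tn e (yy m - w) \<le> r" using w by blast
      have "tn e y = tn e ((yy 0 - yy N) + yy N)" by (simp add: yy0)
      also have "\<dots> \<le> tn e (yy 0 - yy N) + tn e (yy N)" by (rule tn_add)
      also have "\<dots> \<le> 2 * M * norm y + r"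
        using h5[of 0 N] N[rule_format, of N] w0 by simp
      finally show "tn e y \<le> 2 * M * norm y + r" .
    qed
  qed
  show ?thesis
  proof (intro exI conjI allI)
    show "2 * M + 1 > 0" using M0 by simp
    fix x :: 'a
    have "2 * M * norm x \<le> (2 * M + 1) * norm x" by (simp add: algebra_simps)
    then show "tn e x \<le> (2 * M + 1) * norm x" using main[of x] by linarith
  qed
qed

end

definition TB :: "'a::metric_space set \<Rightarrow> bool" where
  "TB S \<longleftrightarrow> (\<forall>\<epsilon>>0. \<exists>k. finite k \<and> S \<subseteq> (\<Union>x\<in>k. ball x \<epsilon>))"

lemma cover_get: "S \<subseteq> (\<Union>x\<in>k. ball x r) \<Longrightarrow> a \<in> S \<Longrightarrow> \<exists>x\<in>k. dist x a < r"
  by (auto simp: subset_eq)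

lemma TB_mono: "TB S \<Longrightarrow> T \<subseteq> S \<Longrightarrow> TB T"
  unfolding TB_def by (meson order_trans)

lemma TB_closure: "TB S \<Longrightarrow> TB (closure S)"
  unfolding TB_def
proof (intro allI impI)
  fix \<epsilon> :: real assume S: "\<forall>\<epsilon>>0. \<exists>k. finite k \<and> S \<subseteq> (\<Union>x\<in>k. ball x \<epsilon>)" and "\<epsilon> > 0"
  then obtain k where k: "finite k" "S \<subseteq> (\<Union>x\<in>k. ball x (\<epsilon>/2))" by (meson half_gt_zero)
  show "\<exists>k. finite k \<and> closure S \<subseteq> (\<Union>x\<in>k. ball x \<epsilon>)"
  proof (intro exI conjI subsetI)
    show "finite k" by fact
    fix y assume "y \<in> closure S"
    then obtain s where s: "s \<in> S" "dist s y < \<epsilon>/2"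
      using closure_approachable[of y S] \<open>\<epsilon> > 0\<close> by (meson half_gt_zero)
    then obtain x where x: "x \<in> k" "dist x s < \<epsilon>/2" using k by auto
    have "dist x y < \<epsilon>" using dist_triangle[of x y s] s x by linarith
    then show "y \<in> (\<Union>x\<in>k. ball x \<epsilon>)" using x by auto
  qed
qed

lemma compact_TB: "compact S \<Longrightarrow> TB S"
  unfolding TB_def using compact_eq_totally_bounded by blast

lemma compact_closure_iff_TB:
  fixes S :: "'a::banach set"
  shows "compact (closure S) \<longleftrightarrow> TB S"
proof
  assume "compact (closure S)"
  then show "TB S" using compact_TB TB_mono closure_subset by blast
next
  assume "TB S"
  then have "TB (closure S)" by (rule TB_closure)
  moreover have "complete (closure S)" by (simp add: complete_eq_closed)
  ultimately show "compact (closure S)" unfolding compact_eq_totally_bounded TB_def by blast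
qed

lemma compact_op_TB: "compact_op K \<longleftrightarrow> TB (blinfun_apply K ` ball 0 1)"
  unfolding compact_op_def by (rule compact_closure_iff_TB)

lemma TB_plus: "TB A \<Longrightarrow> TB B \<Longrightarrow> TB {a + b | a b. a \<in> A \<and> b \<in> (B :: 'a::real_normed_vector set)}"
  unfolding TB_def
proof (intro allI impI)
  fix \<epsilon> :: real assume A: "\<forall>\<epsilon>>0. \<exists>k. finite k \<and> A \<subseteq> (\<Union>x\<in>k. ball x \<epsilon>)"
    and B: "\<forall>\<epsilon>>0. \<exists>k. finite k \<and> B \<subseteq> (\<Union>x\<in>k. ball x \<epsilon>)" and "\<epsilon> > 0"
  then obtain k1 k2 where k: "finite k1" "A \<subseteq> (\<Union>x\<in>k1. ball x (\<epsilon>/2))"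
     "finite k2" "B \<subseteq> (\<Union>x\<in>k2. ball x (\<epsilon>/2))" by (meson half_gt_zero)
  show "\<exists>k. finite k \<and> {a + b | a b. a \<in> A \<and> b \<in> B} \<subseteq> (\<Union>x\<in>k. ball x \<epsilon>)"
  proof (intro exI conjI subsetI)
    show "finite ((\<lambda>(x,y). x + y) ` (k1 \<times> k2))" using k by simp
    fix z assume "z \<in> {a + b | a b. a \<in> A \<and> b \<in> B}"
    then obtain a b where z: "z = a + b" "a \<in> A" "b \<in> B" by blast
    obtain x where x: "x \<in> k1" "dist x a < \<epsilon>/2" using cover_get[OF k(2) z(2)] by blast
    obtain y where y: "y \<in> k2" "dist y b < \<epsilon>/2" using cover_get[OF k(4) z(3)] by blast
    note xy = x y
    have "dist (x + y) z \<le> dist x a + dist y b" unfolding z(1) dist_norm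
      using norm_triangle_ineq[of "x - a" "y - b"] by (simp add: algebra_simps)
    then have "dist (x + y) z < \<epsilon>" using xy by linarith
    moreover have "x + y \<in> (\<lambda>(x,y). x + y) ` (k1 \<times> k2)" using xy by force
    ultimately show "z \<in> (\<Union>x\<in>(\<lambda>(x,y). x + y) ` (k1 \<times> k2). ball x \<epsilon>)"
      using UN_I[of "x+y" "(\<lambda>(x,y). x + y) ` (k1 \<times> k2)" z "\<lambda>x. ball x \<epsilon>"] by simp
  qed
qed

lemma TB_linear_image:
  fixes f :: "'a::real_normed_vector \<Rightarrow> 'b::real_normed_vector"
  assumes "TB A" "bounded_linear f"
  shows "TB (f ` A)"
  unfolding TB_def
proof (intro allI impI)
  fix \<epsilon> :: real assume "\<epsilon> > 0"
  obtain B where B: "B > 0" "\<And>x. norm (f x) \<le> norm x * B"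
    using bounded_linear.pos_bounded[OF assms(2)] by blast
  obtain k where k: "finite k" "A \<subseteq> (\<Union>x\<in>k. ball x (\<epsilon> / B))"
    using assms(1) \<open>\<epsilon> > 0\<close> B unfolding TB_def by (meson divide_pos_pos)
  show "\<exists>k. finite k \<and> f ` A \<subseteq> (\<Union>x\<in>k. ball x \<epsilon>)"
  proof (intro exI conjI subsetI)
    show "finite (f ` k)" using k by simp
    fix z assume "z \<in> f ` A"
    then obtain a where a: "a \<in> A" "z = f a" by blast
    obtain x where x: "x \<in> k" "dist x a < \<epsilon> / B" using cover_get[OF k(2) a(1)] by blast
    have "dist (f x) (f a) = norm (f (x - a))"
      by (simp add: dist_norm linear_diff[OF bounded_linear.linear[OF assms(2)]])
    also have "\<dots> \<le> norm (x - a) * B" by (rule B)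
    also have "\<dots> < \<epsilon>" using x B by (simp add: dist_norm field_simps)
    finally show "z \<in> (\<Union>x\<in>f ` k. ball x \<epsilon>)" using x a by auto
  qed
qed

lemma compact_op_zero: "compact_op 0"
  unfolding compact_op_def zero_blinfun.rep_eq by (subst image_constant[of 0]) auto

lemma compact_op_add: "compact_op K \<Longrightarrow> compact_op L \<Longrightarrow> compact_op (K + L)"
  unfolding compact_op_TB
proof -
  assume "TB (blinfun_apply K ` ball 0 1)" "TB (blinfun_apply L ` ball 0 1)"
  then have "TB {a + b | a b. a \<in> blinfun_apply K ` ball 0 1 \<and> b \<in> blinfun_apply L ` ball 0 1}"
    by (rule TB_plus)
  then show "TB (blinfun_apply (K + L) ` ball 0 1)" by (rule TB_mono) (auto simp: blinfun.add_left)
qed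

lemma compact_op_comp_left: "compact_op K \<Longrightarrow> compact_op (S o\<^sub>L K)"
  unfolding compact_op_TB
proof -
  assume "TB (blinfun_apply K ` ball 0 1)"
  then have "TB (blinfun_apply S ` (blinfun_apply K ` ball 0 1))"
    by (rule TB_linear_image) (rule blinfun.bounded_linear_right)
  then show "TB (blinfun_apply (S o\<^sub>L K) ` ball 0 1)" by (simp add: image_image)
qed

lemma compact_op_scale: "compact_op K \<Longrightarrow> compact_op (c *\<^sub>R K)"
proof -
  assume "compact_op K"
  then have "compact_op ((c *\<^sub>R id_blinfun) o\<^sub>L K)" by (rule compact_op_comp_left)
  moreover have "(c *\<^sub>R id_blinfun) o\<^sub>L K = c *\<^sub>R K" by (rule blinfun_eqI) (simp add: scaleR_blinfun.rep_eq)
  ultimately show ?thesis by simp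
qed

lemma compact_op_comp_right: "compact_op K \<Longrightarrow> compact_op (K o\<^sub>L S)"
  unfolding compact_op_TB
proof -
  assume K: "TB (blinfun_apply K ` ball 0 1)"
  define c where "c = norm S + 1"
  have c: "c > 0" unfolding c_def by (simp add: add_nonneg_pos)
  have "TB ((\<lambda>y. c *\<^sub>R y) ` (blinfun_apply K ` ball 0 1))"
    using K by (rule TB_linear_image) (rule bounded_linear_scaleR_right)
  moreover have "blinfun_apply (K o\<^sub>L S) ` ball 0 1 \<subseteq> (\<lambda>y. c *\<^sub>R y) ` (blinfun_apply K ` ball 0 1)"
  proof
    fix z assume "z \<in> blinfun_apply (K o\<^sub>L S) ` ball 0 1"
    then obtain x where x: "norm x < 1" "z = K (S x)" by auto
    have "norm (S x) \<le> norm S * norm x" by (rule norm_blinfun)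
    also have "\<dots> \<le> norm S" using x by (simp add: mult_left_le)
    finally have "norm (S x /\<^sub>R c) < 1" using c unfolding c_def by (simp add: field_simps)
    moreover have "z = c *\<^sub>R K (S x /\<^sub>R c)" using c x by (simp add: blinfun.scaleR_right)
    ultimately show "z \<in> (\<lambda>y. c *\<^sub>R y) ` (blinfun_apply K ` ball 0 1)" by auto
  qed
  ultimately show "TB (blinfun_apply (K o\<^sub>L S) ` ball 0 1)" by (rule TB_mono)
qed

lemma compact_op_sum: "finite A \<Longrightarrow> (\<And>i. i \<in> A \<Longrightarrow> compact_op (K i)) \<Longrightarrow> compact_op (\<Sum>i\<in>A. K i)"
  by (induction A rule: finite_induct) (auto intro: compact_op_zero compact_op_add)

lemma compact_op_limit:
  assumes lim: "Kn \<longlonglongrightarrow> K" and c: "\<And>n. compact_op (Kn n)"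
  shows "compact_op K"
  unfolding compact_op_TB TB_def
proof (intro allI impI)
  fix \<epsilon> :: real assume "\<epsilon> > 0"
  then obtain n where n: "norm (Kn n - K) < \<epsilon> / 2"
    using LIMSEQ_D[OF lim, of "\<epsilon>/2"] by (meson half_gt_zero le_refl)
  obtain k where k: "finite k" "blinfun_apply (Kn n) ` ball 0 1 \<subseteq> (\<Union>x\<in>k. ball x (\<epsilon>/2))"
    using c[of n] \<open>\<epsilon> > 0\<close> unfolding compact_op_TB TB_def by (meson half_gt_zero)
  show "\<exists>k. finite k \<and> blinfun_apply K ` ball 0 1 \<subseteq> (\<Union>x\<in>k. ball x \<epsilon>)"
  proof (intro exI conjI subsetI)
    show "finite k" by fact
    fix z assume "z \<in> blinfun_apply K ` ball 0 1"
    then obtain x where x: "norm x < 1" "z = K x" by auto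
    have "Kn n x \<in> blinfun_apply (Kn n) ` ball 0 1" using x by auto
    then obtain y where y: "y \<in> k" "dist y (Kn n x) < \<epsilon>/2" using cover_get[OF k(2)] by blast
    have "dist (Kn n x) (K x) = norm ((Kn n - K) x)" by (simp add: dist_norm blinfun.diff_left)
    also have "\<dots> \<le> norm (Kn n - K) * norm x" by (rule norm_blinfun)
    also have "\<dots> \<le> norm (Kn n - K)" using x by (simp add: mult_left_le)
    finally have "dist y (K x) < \<epsilon>" using dist_triangle[of y "K x" "Kn n x"] y n by linarith
    then show "z \<in> (\<Union>x\<in>k. ball x \<epsilon>)" using y x by auto
  qed
qed


definition bconst :: "(nat \<Rightarrow> 'a::banach) \<Rightarrow> real" where
  "bconst e = (SOME C. C > 0 \<and> (\<forall>x. tn e x \<le> C * norm x))"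

definition Qop :: "(nat \<Rightarrow> 'a::banach) \<Rightarrow> nat \<Rightarrow> 'a \<Rightarrow>\<^sub>L 'a" where
  "Qop e i = Blinfun (\<lambda>x. coord e i x *\<^sub>R e i)"

context SB begin

lemma bconst: "bconst e > 0" "tn e x \<le> bconst e * norm x"
proof -
  have "bconst e > 0 \<and> (\<forall>x. tn e x \<le> bconst e * norm x)"
    unfolding bconst_def using basis_constant by (rule someI_ex)
  then show "bconst e > 0" "tn e x \<le> bconst e * norm x" by auto
qed

lemma Pn_bound: "norm (Pn e n x) \<le> bconst e * norm x"
  using tn_ge[of n x] bconst(2)[of x] by linarith

lemma coord_bound: "\<bar>coord e i x\<bar> * norm (e i) \<le> 2 * bconst e * norm x"
  using coord_bound_tn[of i x] bconst(2)[of x] by linarith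

lemma bl_coord: "bounded_linear (coord e i)"
proof (rule bounded_linear_intro[where K = "2 * bconst e / norm (e i)"])
  fix x
  have ne: "norm (e i) > 0" using e_nonzero by simp
  show "norm (coord e i x) \<le> norm x * (2 * bconst e / norm (e i))"
    using coord_bound[of i x] ne by (simp add: field_simps)
qed (simp_all add: coord_add coord_scale)

lemma coord_tendsto: "f \<longlonglongrightarrow> x \<Longrightarrow> (\<lambda>n. coord e i (f n)) \<longlonglongrightarrow> coord e i x"
  by (rule bounded_linear.tendsto[OF bl_coord])

lemma Qop_apply[simp]: "blinfun_apply (Qop e i) x = coord e i x *\<^sub>R e i"
proof -
  have "bounded_linear (\<lambda>x. coord e i x *\<^sub>R e i)"
    by (rule bounded_linear_scaleR_const[OF bl_coord])
  then show ?thesis unfolding Qop_def by (simp add: bounded_linear_Blinfun_apply)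
qed

lemma Pop_apply: "blinfun_apply (\<Sum>i<n. Qop e i) x = Pn e n x"
  by (simp add: blinfun.sum_left Pn_def)

lemma diag_eq: "diagonal_op e K \<Longrightarrow> blinfun_apply K (e i) = lam e K i *\<^sub>R e i"
proof -
  assume D: "diagonal_op e K"
  let ?y = "blinfun_apply K (e i)"
  have "(\<lambda>n. coord e n ?y *\<^sub>R e n) sums ?y" by (rule coord_sums)
  moreover have "(\<lambda>n. coord e n ?y *\<^sub>R e n) = (\<lambda>n. if n = i then lam e K i *\<^sub>R e i else 0)"
    using D unfolding diagonal_op_def lam_def by (auto intro!: ext)
  ultimately have "(\<lambda>n. if n = i then lam e K i *\<^sub>R e i else 0) sums ?y" by simp
  moreover have "(\<lambda>n. if n = i then lam e K i *\<^sub>R e i else 0) sums (lam e K i *\<^sub>R e i)"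
    by (rule sums_single)
  ultimately show ?thesis by (rule sums_unique2)
qed

lemma diagI: "(\<And>i. blinfun_apply K (e i) = d i *\<^sub>R e i) \<Longrightarrow> diagonal_op e K"
  unfolding diagonal_op_def by (simp add: coord_scale coord_basis)

lemma lam_of: "blinfun_apply K (e i) = d *\<^sub>R e i \<Longrightarrow> lam e K i = d"
  unfolding lam_def by (simp add: coord_scale coord_basis)

lemma diag_coord:
  assumes S: "\<And>j. blinfun_apply S (e j) = s j *\<^sub>R e j"
  shows "coord e i (blinfun_apply S x) = s i * coord e i x"
proof -
  have "(\<lambda>n. blinfun_apply S (Pn e n x)) \<longlonglongrightarrow> blinfun_apply S x"
    by (rule bounded_linear.tendsto[OF blinfun.bounded_linear_right Pn_tendsto])
  then have L: "(\<lambda>n. coord e i (blinfun_apply S (Pn e n x))) \<longlonglongrightarrow> coord e i (blinfun_apply S x)"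
    by (rule coord_tendsto)
  have "coord e i (blinfun_apply S (Pn e n x)) = (if i < n then s i * coord e i x else 0)" for n
    by (simp add: Pn_def blinfun.sum_right blinfun.scaleR_right S coord_sum coord_scale coord_basis
        if_distrib cong: if_cong)
  then have "eventually (\<lambda>n. coord e i (blinfun_apply S (Pn e n x)) = s i * coord e i x) sequentially"
    by (intro eventually_mono[OF eventually_gt_at_top[of i]]) simp
  then have "(\<lambda>n. coord e i (blinfun_apply S (Pn e n x))) \<longlonglongrightarrow> s i * coord e i x"
    by (rule tendsto_eventually)
  with L show ?thesis by (rule LIMSEQ_unique)
qed

lemma diag_compact_null:
  assumes K: "compact_op K" and D: "diagonal_op e K"
  shows "lam e K \<longlonglongrightarrow> 0"
proof (rule ccontr)
  assume "\<not> lam e K \<longlonglongrightarrow> 0"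
  then obtain \<epsilon> where \<epsilon>: "\<epsilon> > 0" and fr: "\<forall>N. \<exists>n\<ge>N. \<bar>lam e K n\<bar> \<ge> \<epsilon>"
    unfolding LIMSEQ_def dist_real_def by (auto simp: not_less)
  have "infinite {n. \<bar>lam e K n\<bar> \<ge> \<epsilon>}"
    unfolding infinite_nat_iff_unbounded_le using fr by auto
  then obtain r :: "nat \<Rightarrow> nat" where r: "strict_mono r" "\<And>n. \<bar>lam e K (r n)\<bar> \<ge> \<epsilon>"
    using infinite_enumerate by blast
  define u where "u n = blinfun_apply K (e (r n) /\<^sub>R (2 * norm (e (r n))))" for n
  have ne: "norm (e i) > 0" for i using e_nonzero by simp
  have u_eq: "u n = (inverse (2 * norm (e (r n))) * lam e K (r n)) *\<^sub>R e (r n)" for n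
    unfolding u_def by (simp add: blinfun.scaleR_right diag_eq[OF D])
  have u_norm: "norm (u n) \<ge> \<epsilon> / 2" for n
  proof -
    have "norm (u n) = \<bar>lam e K (r n)\<bar> / 2" unfolding u_eq using ne[of "r n"]
      by (simp add: abs_mult)
    then show ?thesis using r(2)[of n] by simp
  qed
  have uin: "\<forall>n. u n \<in> closure (blinfun_apply K ` ball 0 1)"
  proof
    fix n
    have "e (r n) /\<^sub>R (2 * norm (e (r n))) \<in> ball 0 1" using ne[of "r n"] by simp
    then have "u n \<in> blinfun_apply K ` ball 0 1" unfolding u_def by (rule imageI)
    then show "u n \<in> closure (blinfun_apply K ` ball 0 1)" by (rule closure_subset[THEN subsetD])
  qed
  have "seq_compact (closure (blinfun_apply K ` ball 0 1))"
    using K unfolding compact_op_def by (rule compact_imp_seq_compact)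
  then have "\<exists>l\<in>closure (blinfun_apply K ` ball 0 1). \<exists>r2::nat\<Rightarrow>nat. strict_mono r2 \<and> (u \<circ> r2) \<longlonglongrightarrow> l"
    unfolding seq_compact_def using uin by blast
  then obtain l r2 where r2: "strict_mono r2" "(u \<circ> r2) \<longlonglongrightarrow> l" by blast
  have "norm l \<ge> \<epsilon> / 2"
    using r2(2) by (rule tendsto_lowerbound[OF tendsto_norm]) (use u_norm in \<open>simp_all add: comp_def\<close>)
  moreover have "l = 0"
  proof (rule coord_all_zero)
    fix j
    have L: "(\<lambda>n. coord e j ((u \<circ> r2) n)) \<longlonglongrightarrow> coord e j l" using r2(2) by (rule coord_tendsto)
    have "coord e j ((u \<circ> r2) n) = 0" if "n > j" for n
    proof -
      have "r (r2 n) \<ge> n" using strict_mono_o[OF r(1) r2(1)] seq_suble by (metis comp_apply)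
      then have "r (r2 n) \<noteq> j" using that by simp
      then show ?thesis unfolding comp_apply u_eq by (simp add: coord_scale coord_basis)
    qed
    then have "eventually (\<lambda>n. coord e j ((u \<circ> r2) n) = 0) sequentially"
      by (intro eventually_mono[OF eventually_gt_at_top[of j]])
    then have "(\<lambda>n. coord e j ((u \<circ> r2) n)) \<longlonglongrightarrow> 0" by (rule tendsto_eventually)
    with L show "coord e j l = 0" by (rule LIMSEQ_unique)
  qed
  ultimately show False using \<epsilon> by simp
qed

end

context SB begin

lemma lam_add: "lam e (S + T) i = lam e S i + lam e T i"
  unfolding lam_def by (simp add: blinfun.add_left coord_add)

lemma lam_scale: "lam e (c *\<^sub>R T) i = c * lam e T i"
  unfolding lam_def by (simp add: scaleR_blinfun.rep_eq coord_scale)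

lemma lam_diff: "lam e (S - T) i = lam e S i - lam e T i"
  unfolding lam_def by (simp add: blinfun.diff_left coord_diff)

lemma lam_id: "lam e id_blinfun i = 1"
  unfolding lam_def by (simp add: coord_basis)

lemma lam_zero: "lam e 0 i = 0"
  unfolding lam_def by simp

lemma lam_lip: "\<bar>lam e S i - lam e T i\<bar> \<le> 2 * bconst e * norm (S - T)"
proof -
  have ne: "norm (e i) > 0" using e_nonzero by simp
  have "\<bar>lam e S i - lam e T i\<bar> * norm (e i) = \<bar>coord e i (blinfun_apply (S - T) (e i))\<bar> * norm (e i)"
    unfolding lam_def by (simp add: blinfun.diff_left coord_diff)
  also have "\<dots> \<le> 2 * bconst e * norm (blinfun_apply (S - T) (e i))" by (rule coord_bound)
  also have "\<dots> \<le> 2 * bconst e * (norm (S - T) * norm (e i))"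
    using bconst(1) by (intro mult_left_mono norm_blinfun) auto
  finally show ?thesis using ne by (simp add: field_simps)
qed

lemma lim_lip:
  assumes "lam e S \<longlonglongrightarrow> a" "lam e T \<longlonglongrightarrow> b"
  shows "\<bar>a - b\<bar> \<le> 2 * bconst e * norm (S - T)"
proof (rule tendsto_upperbound)
  show "(\<lambda>i. \<bar>lam e S i - lam e T i\<bar>) \<longlonglongrightarrow> \<bar>a - b\<bar>" by (intro tendsto_rabs tendsto_diff assms)
qed (auto simp: lam_lip)

lemma diag_add: "diagonal_op e K \<Longrightarrow> diagonal_op e L \<Longrightarrow> diagonal_op e (K + L)"
  by (rule diagI[where d = "\<lambda>i. lam e K i + lam e L i"]) (simp add: blinfun.add_left diag_eq scaleR_add_left)

lemma diag_scale: "diagonal_op e K \<Longrightarrow> diagonal_op e (c *\<^sub>R K)"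
  by (rule diagI[where d = "\<lambda>i. c * lam e K i"]) (simp add: scaleR_blinfun.rep_eq diag_eq)

lemma diag_comp: "diagonal_op e K \<Longrightarrow> diagonal_op e L \<Longrightarrow> diagonal_op e (K o\<^sub>L L)"
  by (rule diagI[where d = "\<lambda>i. lam e K i * lam e L i"]) (simp add: blinfun.scaleR_right diag_eq)

lemma diag_zero: "diagonal_op e 0"
  by (rule diagI[where d = "\<lambda>i. 0"]) simp

lemma alg_decomp:
  assumes "T \<in> diag_alg e"
  obtains c K where "T = c *\<^sub>R id_blinfun + K" "compact_op K" "diagonal_op e K"
  using assms unfolding diag_alg_def by blast

lemma alg_intro: "compact_op K \<Longrightarrow> diagonal_op e K \<Longrightarrow> c *\<^sub>R id_blinfun + K \<in> diag_alg e"
  unfolding diag_alg_def by blast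

lemma alg_diag: "T \<in> diag_alg e \<Longrightarrow> blinfun_apply T (e i) = lam e T i *\<^sub>R e i"
proof -
  assume "T \<in> diag_alg e"
  then obtain c K where T: "T = c *\<^sub>R id_blinfun + K" "compact_op K" "diagonal_op e K" by (rule alg_decomp)
  have "blinfun_apply T (e i) = (c + lam e K i) *\<^sub>R e i"
    using T by (simp add: blinfun.add_left scaleR_blinfun.rep_eq diag_eq scaleR_add_left)
  moreover then have "lam e T i = c + lam e K i" by (rule lam_of)
  ultimately show ?thesis by simp
qed

lemma alg_tendsto:
  assumes "compact_op K" "diagonal_op e K"
  shows "lam e (c *\<^sub>R id_blinfun + K) \<longlonglongrightarrow> c"
proof -
  have "lam e (c *\<^sub>R id_blinfun + K) = (\<lambda>i. c + lam e K i)"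
    by (rule ext) (simp add: lam_add lam_scale lam_id)
  moreover have "(\<lambda>i. c + lam e K i) \<longlonglongrightarrow> c + 0"
    by (intro tendsto_add tendsto_const diag_compact_null assms)
  ultimately show ?thesis by simp
qed

lemma alg_conv: "T \<in> diag_alg e \<Longrightarrow> convergent (lam e T)"
  by (metis alg_decomp alg_tendsto convergentI)

lemma alg_lim: "T \<in> diag_alg e \<Longrightarrow> lam e T \<longlonglongrightarrow> lim (lam e T)"
  using alg_conv convergent_LIMSEQ_iff by blast

lemma alg_zero: "0 \<in> diag_alg e"
  using alg_intro[OF compact_op_zero diag_zero, of 0] by simp

lemma alg_id: "id_blinfun \<in> diag_alg e"
  using alg_intro[OF compact_op_zero diag_zero, of 1] by simp

lemma alg_add: "S \<in> diag_alg e \<Longrightarrow> T \<in> diag_alg e \<Longrightarrow> S + T \<in> diag_alg e"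
proof -
  assume "S \<in> diag_alg e" "T \<in> diag_alg e"
  then obtain a K b L where S: "S = a *\<^sub>R id_blinfun + K" "compact_op K" "diagonal_op e K"
    and T: "T = b *\<^sub>R id_blinfun + L" "compact_op L" "diagonal_op e L" by (metis alg_decomp)
  have "S + T = (a + b) *\<^sub>R id_blinfun + (K + L)" using S T by (simp add: algebra_simps)
  then show ?thesis using alg_intro[OF compact_op_add[OF S(2) T(2)] diag_add[OF S(3) T(3)]] by simp
qed

lemma alg_scale: "T \<in> diag_alg e \<Longrightarrow> c *\<^sub>R T \<in> diag_alg e"
proof -
  assume "T \<in> diag_alg e"
  then obtain b L where T: "T = b *\<^sub>R id_blinfun + L" "compact_op L" "diagonal_op e L" by (metis alg_decomp)
  have "c *\<^sub>R T = (c * b) *\<^sub>R id_blinfun + c *\<^sub>R L" using T by (simp add: algebra_simps)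
  then show ?thesis using alg_intro[OF compact_op_scale[OF T(2)] diag_scale[OF T(3)]] by simp
qed

lemma alg_comp: "S \<in> diag_alg e \<Longrightarrow> T \<in> diag_alg e \<Longrightarrow> S o\<^sub>L T \<in> diag_alg e"
proof -
  assume "S \<in> diag_alg e" "T \<in> diag_alg e"
  then obtain a K b L where S: "S = a *\<^sub>R id_blinfun + K" "compact_op K" "diagonal_op e K"
    and T: "T = b *\<^sub>R id_blinfun + L" "compact_op L" "diagonal_op e L" by (metis alg_decomp)
  have eq: "S o\<^sub>L T = (a * b) *\<^sub>R id_blinfun + (a *\<^sub>R L + b *\<^sub>R K + (K o\<^sub>L L))"
    unfolding S(1) T(1) by (intro blinfun_eqI) (simp add: blinfun.add_left blinfun.add_right scaleR_blinfun.rep_eq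
        blinfun.scaleR_right algebra_simps)
  have "compact_op (a *\<^sub>R L + b *\<^sub>R K + (K o\<^sub>L L))"
    by (intro compact_op_add compact_op_scale compact_op_comp_left S T)
  moreover have "diagonal_op e (a *\<^sub>R L + b *\<^sub>R K + (K o\<^sub>L L))"
    by (intro diag_add diag_scale diag_comp S T)
  ultimately show ?thesis unfolding eq by (rule alg_intro)
qed

lemma lam_comp: "S \<in> diag_alg e \<Longrightarrow> T \<in> diag_alg e \<Longrightarrow> lam e (S o\<^sub>L T) i = lam e S i * lam e T i"
  by (rule lam_of) (simp add: alg_diag blinfun.scaleR_right)

lemma subspace_alg: "subspace (diag_alg e)"
  unfolding subspace_def using alg_zero alg_add alg_scale by blast

lemma closed_alg: "closed (diag_alg e)"
proof (rule closed_sequential_limits[THEN iffD2], intro allI impI, elim conjE)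
  fix Tn T assume inA: "\<forall>n. Tn n \<in> diag_alg e" and lim: "Tn \<longlonglongrightarrow> T"
  define c where "c n = lim (lam e (Tn n))" for n
  have cl: "lam e (Tn n) \<longlonglongrightarrow> c n" for n unfolding c_def using inA alg_lim by blast
  have cdist: "\<bar>c n - c m\<bar> \<le> 2 * bconst e * norm (Tn n - Tn m)" for n m
    by (rule lim_lip[OF cl cl])
  have "Cauchy c"
  proof (rule metric_CauchyI)
    fix \<epsilon> :: real assume "\<epsilon> > 0"
    have B: "2 * bconst e > 0" using bconst(1) by simp
    have "Cauchy Tn" using lim by (rule LIMSEQ_imp_Cauchy)
    then obtain M where M: "\<forall>m\<ge>M. \<forall>n\<ge>M. dist (Tn m) (Tn n) < \<epsilon> / (2 * bconst e)"
      using \<open>\<epsilon> > 0\<close> B unfolding Cauchy_def by (meson divide_pos_pos)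
    show "\<exists>M. \<forall>m\<ge>M. \<forall>n\<ge>M. dist (c m) (c n) < \<epsilon>"
    proof (intro exI allI impI)
      fix m n assume "m \<ge> M" "n \<ge> M"
      then have "norm (Tn m - Tn n) < \<epsilon> / (2 * bconst e)" using M by (simp add: dist_norm)
      then have "2 * bconst e * norm (Tn m - Tn n) < \<epsilon>" using B by (simp add: field_simps)
      then show "dist (c m) (c n) < \<epsilon>" using cdist[of m n] by (simp add: dist_real_def)
    qed
  qed
  then obtain c0 where c0: "c \<longlonglongrightarrow> c0" using Cauchy_convergent_iff convergent_def by blast
  define Kn where "Kn n = Tn n - c n *\<^sub>R id_blinfun" for n
  define K where "K = T - c0 *\<^sub>R id_blinfun"
  have Kn: "compact_op (Kn n) \<and> diagonal_op e (Kn n)" for n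
  proof -
    obtain a L where TL: "Tn n = a *\<^sub>R id_blinfun + L" "compact_op L" "diagonal_op e L"
      using inA alg_decomp by blast
    have "lam e (Tn n) \<longlonglongrightarrow> a" unfolding TL(1) by (rule alg_tendsto[OF TL(2,3)])
    then have "a = c n" using cl[of n] by (rule LIMSEQ_unique)
    then have "Kn n = L" unfolding Kn_def TL(1) by simp
    then show ?thesis using TL by simp
  qed
  have KnK: "Kn \<longlonglongrightarrow> K" unfolding Kn_def K_def
    by (intro tendsto_diff lim tendsto_scaleR c0 tendsto_const)
  have "compact_op K" using KnK by (rule compact_op_limit) (use Kn in blast)
  moreover have "diagonal_op e K"
    unfolding diagonal_op_def
  proof (intro allI impI)
    fix i j :: nat assume "i \<noteq> j"
    have "(\<lambda>n. blinfun_apply (Kn n) (e i)) \<longlonglongrightarrow> blinfun_apply K (e i)"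
      by (rule blinfun.tendsto[OF KnK tendsto_const])
    then have L: "(\<lambda>n. coord e j (blinfun_apply (Kn n) (e i))) \<longlonglongrightarrow> coord e j (blinfun_apply K (e i))"
      by (rule coord_tendsto)
    have "coord e j (blinfun_apply (Kn n) (e i)) = 0" for n
      using Kn[of n] \<open>i \<noteq> j\<close> unfolding diagonal_op_def by blast
    then show "coord e j (blinfun_apply K (e i)) = 0" using L by (simp add: LIMSEQ_const_iff)
  qed
  ultimately have "c0 *\<^sub>R id_blinfun + K \<in> diag_alg e" by (rule alg_intro)
  then show "T \<in> diag_alg e" unfolding K_def by simp
qed

end

lemma norm_from_ball:
  fixes A :: "'a::real_normed_vector \<Rightarrow>\<^sub>L 'b::real_normed_vector"
  assumes b: "b \<ge> 0" and H: "\<And>x. norm x < 1 \<Longrightarrow> norm (blinfun_apply A x) \<le> b"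
  shows "norm A \<le> 2 * b"
proof (rule norm_blinfun_bound)
  show "0 \<le> 2 * b" using b by simp
  fix x
  show "norm (blinfun_apply A x) \<le> 2 * b * norm x"
  proof (cases "x = 0")
    case True then show ?thesis by simp
  next
    case False
    then have nx: "norm x > 0" by simp
    define x' where "x' = x /\<^sub>R (2 * norm x)"
    have "norm x' < 1" unfolding x'_def using nx by simp
    then have "norm (blinfun_apply A x') \<le> b" by (rule H)
    moreover have "blinfun_apply A x = (2 * norm x) *\<^sub>R blinfun_apply A x'"
      unfolding x'_def using nx by (simp add: blinfun.scaleR_right)
    ultimately show ?thesis using nx by (simp add: mult_left_mono mult.commute mult.left_commute)
  qed
qed

context SB begin

lemma lam_ext_inf: "T \<in> diag_alg e \<Longrightarrow> lam e T \<longlonglongrightarrow> lam_ext e T \<infinity>"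
  unfolding lam_ext_def by (simp add: alg_lim)

lemma lam_ext_tendsto_eq: "lam e T \<longlonglongrightarrow> a \<Longrightarrow> lam_ext e T \<infinity> = a"
  unfolding lam_ext_def by (simp add: limI)

lemma lam_ext_add: "S \<in> diag_alg e \<Longrightarrow> T \<in> diag_alg e \<Longrightarrow> lam_ext e (S + T) k = lam_ext e S k + lam_ext e T k"
proof (cases k)
  case (enat i) then show ?thesis by (simp add: lam_ext_def lam_add)
next
  case infinity
  assume S: "S \<in> diag_alg e" and T: "T \<in> diag_alg e"
  have "lam e (S + T) \<longlonglongrightarrow> lam_ext e S \<infinity> + lam_ext e T \<infinity>"
    unfolding lam_add[abs_def] by (intro tendsto_add lam_ext_inf S T)
  then show ?thesis using infinity by (simp add: lam_ext_tendsto_eq)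
qed

lemma lam_ext_scale: "T \<in> diag_alg e \<Longrightarrow> lam_ext e (c *\<^sub>R T) k = c * lam_ext e T k"
proof (cases k)
  case (enat i) then show ?thesis by (simp add: lam_ext_def lam_scale)
next
  case infinity
  assume T: "T \<in> diag_alg e"
  have "lam e (c *\<^sub>R T) \<longlonglongrightarrow> c * lam_ext e T \<infinity>"
    unfolding lam_scale[abs_def] by (intro tendsto_mult tendsto_const lam_ext_inf T)
  then show ?thesis using infinity by (simp add: lam_ext_tendsto_eq)
qed

lemma lam_ext_comp: "S \<in> diag_alg e \<Longrightarrow> T \<in> diag_alg e \<Longrightarrow> lam_ext e (S o\<^sub>L T) k = lam_ext e S k * lam_ext e T k"
proof (cases k)
  case (enat i)
  assume "S \<in> diag_alg e" "T \<in> diag_alg e"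
  then show ?thesis using enat by (simp add: lam_ext_def lam_comp)
next
  case infinity
  assume S: "S \<in> diag_alg e" and T: "T \<in> diag_alg e"
  have "lam e (S o\<^sub>L T) = (\<lambda>i. lam e S i * lam e T i)" using S T by (simp add: lam_comp fun_eq_iff)
  moreover have "(\<lambda>i. lam e S i * lam e T i) \<longlonglongrightarrow> lam_ext e S \<infinity> * lam_ext e T \<infinity>"
    by (intro tendsto_mult lam_ext_inf S T)
  ultimately show ?thesis using infinity by (simp add: lam_ext_tendsto_eq)
qed

lemma lam_ext_lip: "S \<in> diag_alg e \<Longrightarrow> T \<in> diag_alg e \<Longrightarrow>
    \<bar>lam_ext e S k - lam_ext e T k\<bar> \<le> 2 * bconst e * norm (S - T)"
proof (cases k)
  case (enat i) then show ?thesis by (simp add: lam_ext_def lam_lip)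
next
  case infinity
  assume S: "S \<in> diag_alg e" and T: "T \<in> diag_alg e"
  show ?thesis using infinity lim_lip[OF lam_ext_inf[OF S] lam_ext_inf[OF T]] by simp
qed

lemma A_L_ideal: "closed_ideal_of (diag_alg e) (A_L e L)"
  unfolding closed_ideal_of_def
proof (intro conjI ballI)
  show "A_L e L \<subseteq> diag_alg e" unfolding A_L_def by blast
  show "subspace (A_L e L)"
    unfolding subspace_def A_L_def
    using alg_zero alg_add alg_scale lam_ext_scale[OF alg_zero, of 0]
    by (auto simp: lam_ext_add lam_ext_scale)
  show "closed (A_L e L)"
  proof (rule closed_sequential_limits[THEN iffD2], intro allI impI, elim conjE)
    fix Tn T assume inA: "\<forall>n. Tn n \<in> A_L e L" and lim: "Tn \<longlonglongrightarrow> T"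
    have TA: "T \<in> diag_alg e"
      using closed_alg[unfolded closed_sequential_limits] inA lim unfolding A_L_def by blast
    have "lam_ext e T k = 0" if k: "k \<in> L" for k
    proof -
      have "\<bar>lam_ext e T k\<bar> \<le> 2 * bconst e * norm (T - Tn n)" for n
        using lam_ext_lip[OF TA, of "Tn n" k] inA k unfolding A_L_def by auto
      moreover have "(\<lambda>n. 2 * bconst e * norm (T - Tn n)) \<longlonglongrightarrow> 2 * bconst e * norm (T - T)"
        by (intro tendsto_mult tendsto_const tendsto_norm tendsto_diff lim)
      ultimately have "\<bar>lam_ext e T k\<bar> \<le> 0"
        by (intro LIMSEQ_le_const[of "\<lambda>n. 2 * bconst e * norm (T - Tn n)"]) auto
      then show ?thesis by simp
    qed
    then show "T \<in> A_L e L" unfolding A_L_def using TA by blast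
  qed
  fix S T assume S: "S \<in> diag_alg e" and T: "T \<in> A_L e L"
  then have TA: "T \<in> diag_alg e" unfolding A_L_def by blast
  show "S o\<^sub>L T \<in> A_L e L" using T S TA alg_comp unfolding A_L_def by (auto simp: lam_ext_comp)
  show "T o\<^sub>L S \<in> A_L e L" using T S TA alg_comp unfolding A_L_def by (auto simp: lam_ext_comp)
qed

end

context SB begin

lemma Qop_alg: "Qop e i \<in> diag_alg e"
proof -
  define R where "R = 2 * bconst e / norm (e i)"
  have ne: "norm (e i) > 0" using e_nonzero by simp
  have "compact ((\<lambda>t. t *\<^sub>R e i) ` cball 0 R)"
    by (intro compact_continuous_image continuous_intros compact_cball)
  moreover have "blinfun_apply (Qop e i) ` ball 0 1 \<subseteq> (\<lambda>t. t *\<^sub>R e i) ` cball 0 R"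
  proof
    fix z assume "z \<in> blinfun_apply (Qop e i) ` ball 0 1"
    then obtain x where x: "norm x < 1" "z = coord e i x *\<^sub>R e i" by auto
    have "\<bar>coord e i x\<bar> * norm (e i) \<le> 2 * bconst e * norm x" by (rule coord_bound)
    also have "\<dots> \<le> 2 * bconst e" using x bconst(1) by (simp add: mult_left_le)
    finally have "\<bar>coord e i x\<bar> \<le> R" unfolding R_def using ne by (simp add: field_simps)
    then show "z \<in> (\<lambda>t. t *\<^sub>R e i) ` cball 0 R" using x by auto
  qed
  ultimately have "compact_op (Qop e i)" unfolding compact_op_TB by (meson TB_mono compact_TB)
  moreover have "diagonal_op e (Qop e i)"
    by (rule diagI[where d = "\<lambda>j. if j = i then 1 else 0"]) (simp add: coord_basis)
  ultimately have "0 *\<^sub>R id_blinfun + Qop e i \<in> diag_alg e" by (rule alg_intro)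
  then show ?thesis by simp
qed

lemma Q_comp: "S \<in> diag_alg e \<Longrightarrow> Qop e i o\<^sub>L S = lam e S i *\<^sub>R Qop e i"
  by (rule blinfun_eqI) (simp add: scaleR_blinfun.rep_eq diag_coord[OF alg_diag])

lemma ideal_G:
  assumes J: "closed_ideal_of (diag_alg e) J" and K: "compact_op K" "diagonal_op e K"
    and van: "\<And>i. (\<forall>T\<in>J. lam_ext e T (enat i) = 0) \<Longrightarrow> lam e K i = 0"
  shows "K \<in> J"
proof -
  have Jsub: "subspace J" and Jcl: "closed J" and Jm: "\<And>S T. S \<in> diag_alg e \<Longrightarrow> T \<in> J \<Longrightarrow> S o\<^sub>L T \<in> J"
    and JA: "J \<subseteq> diag_alg e"
    using J unfolding closed_ideal_of_def by auto
  have KA: "K \<in> diag_alg e" using alg_intro[OF K, of 0] by simp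
  have Qin: "Qop e i \<in> J" if nz: "\<not> (\<forall>T\<in>J. lam_ext e T (enat i) = 0)" for i
  proof -
    obtain S where S: "S \<in> J" "lam e S i \<noteq> 0" using nz by (auto simp: lam_ext_def)
    have "Qop e i o\<^sub>L S \<in> J" using Jm[OF Qop_alg S(1)] .
    then have "inverse (lam e S i) *\<^sub>R (Qop e i o\<^sub>L S) \<in> J" by (rule subspace_scale[OF Jsub])
    moreover have "inverse (lam e S i) *\<^sub>R (Qop e i o\<^sub>L S) = Qop e i"
      using S JA Q_comp by auto
    ultimately show ?thesis by simp
  qed
  have tmJ: "Qop e i o\<^sub>L K \<in> J" for i
  proof (cases "\<forall>T\<in>J. lam_ext e T (enat i) = 0")
    case True
    then have "Qop e i o\<^sub>L K = 0" using Q_comp[OF KA, of i] van[of i] by simp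
    then show ?thesis using subspace_0[OF Jsub] by simp
  next
    case False
    then have "lam e K i *\<^sub>R Qop e i \<in> J" using Qin Jsub by (simp add: subspace_scale)
    then show ?thesis using Q_comp[OF KA, of i] by simp
  qed
  define Pk where "Pk n = (\<Sum>i<n. Qop e i o\<^sub>L K)" for n
  have PkJ: "Pk n \<in> J" for n unfolding Pk_def using Jsub tmJ by (rule subspace_sum)
  have Pk_apply: "blinfun_apply (Pk n) x = Pn e n (blinfun_apply K x)" for n x
    unfolding Pk_def Pn_def by (simp add: blinfun.sum_left)
  have "Pk \<longlonglongrightarrow> K"
  proof (rule LIMSEQ_I)
    fix \<epsilon> :: real assume "\<epsilon> > 0"
    define B where "B = bconst e"
    have B: "B > 0" unfolding B_def by (rule bconst(1))
    define \<delta> where "\<delta> = \<epsilon> / (4 * (B + 2))"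
    have \<delta>: "\<delta> > 0" unfolding \<delta>_def using \<open>\<epsilon> > 0\<close> B by simp
    obtain F where F: "finite F" "blinfun_apply K ` ball 0 1 \<subseteq> (\<Union>y\<in>F. ball y \<delta>)"
      using K(1) \<delta> unfolding compact_op_TB TB_def by blast
    have "eventually (\<lambda>n. \<forall>y\<in>F. dist (Pn e n y) y < \<delta>) sequentially"
      using F(1) by (rule eventually_ball_finite) (use tendstoD[OF Pn_tendsto \<delta>] in blast)
    then obtain N where N: "\<And>n y. n \<ge> N \<Longrightarrow> y \<in> F \<Longrightarrow> dist (Pn e n y) y < \<delta>"
      unfolding eventually_sequentially by blast
    show "\<exists>N. \<forall>n\<ge>N. norm (Pk n - K) < \<epsilon>"
    proof (intro exI allI impI)
      fix n assume n: "n \<ge> N"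
      have "norm (Pk n - K) \<le> 2 * ((B + 2) * \<delta>)"
      proof (rule norm_from_ball)
        show "0 \<le> (B + 2) * \<delta>" using B \<delta> by simp
        fix x :: 'a assume x: "norm x < 1"
        let ?z = "blinfun_apply K x"
        have "?z \<in> blinfun_apply K ` ball 0 1" using x by simp
        then obtain y where y: "y \<in> F" "dist y ?z < \<delta>" using cover_get[OF F(2)] by blast
        have a: "norm (Pn e n (?z - y)) \<le> B * \<delta>"
        proof -
          have "norm (Pn e n (?z - y)) \<le> B * norm (?z - y)" unfolding B_def by (rule Pn_bound)
          also have "\<dots> \<le> B * \<delta>" using y B by (intro mult_left_mono) (auto simp: dist_norm norm_minus_commute)
          finally show ?thesis .
        qed
        have b: "norm (Pn e n y - y) < \<delta>" using N[OF n y(1)] by (simp add: dist_norm)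
        have c: "norm (y - ?z) < \<delta>" using y by (simp add: dist_norm)
        have eqn: "blinfun_apply (Pk n - K) x = Pn e n (?z - y) + (Pn e n y - y) + (y - ?z)"
          by (simp add: blinfun.diff_left Pk_apply linear_diff[OF linear_Pn])
        have "norm (blinfun_apply (Pk n - K) x) \<le> norm (Pn e n (?z - y) + (Pn e n y - y)) + norm (y - ?z)"
          unfolding eqn by (rule norm_triangle_ineq)
        moreover have "norm (Pn e n (?z - y) + (Pn e n y - y)) \<le> norm (Pn e n (?z - y)) + norm (Pn e n y - y)"
          by (rule norm_triangle_ineq)
        ultimately have "norm (blinfun_apply (Pk n - K) x) \<le> norm (Pn e n (?z - y)) + norm (Pn e n y - y) + norm (y - ?z)"
          by linarith
        then show "norm (blinfun_apply (Pk n - K) x) \<le> (B + 2) * \<delta>" using a b c by (simp add: algebra_simps)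
      qed
      also have "\<dots> = \<epsilon> / 2" unfolding \<delta>_def using B by (simp add: field_simps)
      also have "\<dots> < \<epsilon>" using \<open>\<epsilon> > 0\<close> by simp
      finally show "norm (Pk n - K) < \<epsilon>" .
    qed
  qed
  then show "K \<in> J" using closed_sequentially[OF Jcl] PkJ by blast
qed

end

context SB begin

lemma ideal_converse:
  assumes J: "closed_ideal_of (diag_alg e) J"
  shows "\<exists>L::enat set. closed L \<and> J = A_L e L"
proof -
  have Jsub: "subspace J" and Jm: "\<And>S T. S \<in> diag_alg e \<Longrightarrow> T \<in> J \<Longrightarrow> S o\<^sub>L T \<in> J"
    and JA: "J \<subseteq> diag_alg e"
    using J unfolding closed_ideal_of_def by auto
  define L where "L = {k. \<forall>T\<in>J. lam_ext e T k = 0}"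
  have "open (- L)"
    unfolding open_enat_iff
  proof
    assume "\<infinity> \<in> - L"
    then obtain T where T: "T \<in> J" "lam_ext e T \<infinity> \<noteq> 0" unfolding L_def by auto
    define t where "t = lam_ext e T \<infinity>"
    have tl: "lam e T \<longlonglongrightarrow> t" unfolding t_def using T JA lam_ext_inf by blast
    have "\<bar>t\<bar> > 0" using T unfolding t_def by simp
    then have "eventually (\<lambda>i. dist (lam e T i) t < \<bar>t\<bar>) sequentially" using tl by (rule tendstoD[rotated])
    then obtain N where N: "\<And>i. i \<ge> N \<Longrightarrow> dist (lam e T i) t < \<bar>t\<bar>"
      unfolding eventually_sequentially by blast
    have "{enat N <..} \<subseteq> - L"
    proof
      fix k assume k: "k \<in> {enat N <..}"
      show "k \<in> - L"
      proof (cases k)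
        case (enat i)
        then have "i \<ge> N" using k by simp
        then have "lam e T i \<noteq> 0" using N[of i] by (auto simp: dist_real_def)
        then show ?thesis using T(1) enat unfolding L_def by (auto simp: lam_ext_def)
      next
        case infinity
        then show ?thesis using T unfolding L_def by auto
      qed
    qed
    then show "\<exists>n::nat. {enat n <..} \<subseteq> - L" by blast
  qed
  then have clL: "closed L" unfolding closed_def by simp
  have "J = A_L e L"
  proof
    show "J \<subseteq> A_L e L" unfolding A_L_def L_def using JA by blast
    show "A_L e L \<subseteq> J"
    proof
      fix T assume TA: "T \<in> A_L e L"
      then have TD: "T \<in> diag_alg e" and T0: "\<And>k. k \<in> L \<Longrightarrow> lam_ext e T k = 0"
        unfolding A_L_def by auto
      obtain t K where TK: "T = t *\<^sub>R id_blinfun + K" "compact_op K" "diagonal_op e K"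
        using TD by (rule alg_decomp)
      have tT: "lam_ext e T \<infinity> = t" unfolding TK(1) by (rule lam_ext_tendsto_eq[OF alg_tendsto[OF TK(2,3)]])
      show "T \<in> J"
      proof (cases "t = 0")
        case True
        then have TKe: "T = K" using TK(1) by simp
        show ?thesis unfolding TKe
        proof (rule ideal_G[OF J TK(2,3)])
          fix i assume "\<forall>S\<in>J. lam_ext e S (enat i) = 0"
          then have "enat i \<in> L" unfolding L_def by simp
          then have "lam_ext e T (enat i) = 0" by (rule T0)
          then show "lam e K i = 0" using TKe by (simp add: lam_ext_def)
        qed
      next
        case False
        then have "\<infinity> \<notin> L" using T0 tT by auto
        then obtain S where S: "S \<in> J" "lam_ext e S \<infinity> \<noteq> 0" unfolding L_def by auto
        have SD: "S \<in> diag_alg e" using S JA by blast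
        obtain s KS where SK: "S = s *\<^sub>R id_blinfun + KS" "compact_op KS" "diagonal_op e KS"
          using SD by (rule alg_decomp)
        have sS: "lam_ext e S \<infinity> = s" unfolding SK(1) by (rule lam_ext_tendsto_eq[OF alg_tendsto[OF SK(2,3)]])
        then have s0: "s \<noteq> 0" using S by simp
        define W where "W = K + (- (t / s)) *\<^sub>R KS"
        have Weq: "W = T - (t / s) *\<^sub>R S" unfolding W_def TK(1) SK(1) using s0
          by (simp add: algebra_simps)
        have WJ: "W \<in> J"
        proof (rule ideal_G[OF J])
          show "compact_op W" unfolding W_def by (intro compact_op_add compact_op_scale TK SK)
          show "diagonal_op e W" unfolding W_def by (intro diag_add diag_scale TK SK)
          fix i assume H: "\<forall>S\<in>J. lam_ext e S (enat i) = 0"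
          then have "enat i \<in> L" unfolding L_def by simp
          then have "lam_ext e T (enat i) = 0" by (rule T0)
          moreover have "lam_ext e S (enat i) = 0" using H S by blast
          ultimately show "lam e W i = 0" unfolding Weq by (simp add: lam_diff lam_scale lam_ext_def)
        qed
        have "(t / s) *\<^sub>R S \<in> J" using S(1) by (rule subspace_scale[OF Jsub])
        then have "W + (t / s) *\<^sub>R S \<in> J" using WJ by (intro subspace_add[OF Jsub])
        then show ?thesis unfolding Weq by simp
      qed
    qed
  qed
  then show ?thesis using clL by blast
qed

end

theorem proposition1p1:
  fixes e :: "nat \<Rightarrow> 'a::banach"
  assumes "schauder_basis e"
  shows "(\<forall>T\<in>diag_alg e. convergent (lam e T)) \<and>
         (\<forall>J. closed_ideal_of (diag_alg e) J \<longleftrightarrow> (\<exists>L::enat set. closed L \<and> J = A_L e L))"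
proof -
  interpret SB e by unfold_locales (rule assms)
  show ?thesis
  proof (intro conjI ballI allI iffI)
    fix T assume "T \<in> diag_alg e"
    then show "convergent (lam e T)" by (rule alg_conv)
  next
    fix J assume "closed_ideal_of (diag_alg e) J"
    then show "\<exists>L::enat set. closed L \<and> J = A_L e L" by (rule ideal_converse)
  next
    fix J assume "\<exists>L::enat set. closed L \<and> J = A_L e L"
    then obtain L :: "enat set" where "J = A_L e L" by blast
    then show "closed_ideal_of (diag_alg e) J" using A_L_ideal by simp
  qed
qed


end
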